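(* Let $\mathcal{H}$ be a complex Hilbert space of finite dimension $n\ge 2$, $m\ge 2$, and $\rho$ a density operator on $\mathcal{H}^{\otimes m}$ in reduced state consensus (RSC) such that each reduced state $\bar\rho_k$ is a pure state (rank one). Then $\rho$ is in symmetric state consensus (SSC).
   Context: The reduced states are $\bar\rho_k=\mathrm{Tr}_{\bigotimes_{j\neq k}\mathcal{H}_j}(\rho)$ (partial trace over all tensor factors except the $k$-th). $\rho$ is RSC if $\bar\rho_1=\cdots=\bar\rho_m$. For a permutation $\pi$ of $\{1,\dots,m\}$, $U_\pi$ is the unitary on $\mathcal{H}^{\otimes m}$ with $U_\pi(X_1\otimes\cdots\otimes X_m)U_\pi^\dagger=X_{\pi(1)}\otimes\cdots\otimes X_{\pi(m)}$; $\rho$ is SSC if $U_\pi\rho U_\pi^\dagger=\rho$ for all permutations $\pi$. *)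

theory Defs
  imports Complex_Main "HOL-Combinatorics.Permutations" "HOL-Library.FuncSet"
begin

(* H = C^n with orthonormal basis indexed by {0..<n}; H^{\<otimes>m} has the product basis
   indexed by tuples f : {0..<m} \<rightarrow> {0..<n} (extensional, value undefined outside).
   Operators on H^{\<otimes>m} are given by their matrices in this basis. *)

definition tidx :: "nat \<Rightarrow> nat \<Rightarrow> (nat \<Rightarrow> nat) set" where
  "tidx n m = PiE {0..<m} (\<lambda>_. {0..<n})"

type_synonym top = "(nat \<Rightarrow> nat) \<Rightarrow> (nat \<Rightarrow> nat) \<Rightarrow> complex"

definition density_op :: "nat \<Rightarrow> nat \<Rightarrow> top \<Rightarrow> bool" where
  "density_op n m \<rho> \<longleftrightarrow>
     (\<forall>f\<in>tidx n m. \<forall>g\<in>tidx n m. \<rho> g f = cnj (\<rho> f g)) \<and>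
     (\<forall>v :: (nat \<Rightarrow> nat) \<Rightarrow> complex.
        0 \<le> Re (\<Sum>f\<in>tidx n m. \<Sum>g\<in>tidx n m. cnj (v f) * \<rho> f g * v g)) \<and>
     (\<Sum>f\<in>tidx n m. \<rho> f f) = 1"

definition reduced :: "nat \<Rightarrow> nat \<Rightarrow> top \<Rightarrow> nat \<Rightarrow> nat \<Rightarrow> nat \<Rightarrow> complex" where
  "reduced n m \<rho> k a b =
     (\<Sum>(f,g)\<in>{(f,g). f \<in> tidx n m \<and> g \<in> tidx n m \<and> f k = a \<and> g k = b \<and>
                       (\<forall>j\<in>{0..<m}. j \<noteq> k \<longrightarrow> f j = g j)}. \<rho> f g)"

definition pure_state :: "nat \<Rightarrow> (nat \<Rightarrow> nat \<Rightarrow> complex) \<Rightarrow> bool" where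
  "pure_state n \<sigma> \<longleftrightarrow> (\<exists>\<psi> :: nat \<Rightarrow> complex. (\<Sum>i<n. (cmod (\<psi> i))\<^sup>2) = 1 \<and>
      (\<forall>a<n. \<forall>b<n. \<sigma> a b = \<psi> a * cnj (\<psi> b)))"

definition RSC :: "nat \<Rightarrow> nat \<Rightarrow> top \<Rightarrow> bool" where
  "RSC n m \<rho> \<longleftrightarrow> (\<forall>k<m. \<forall>l<m. \<forall>a<n. \<forall>b<n. reduced n m \<rho> k a b = reduced n m \<rho> l a b)"

(* matrix of U_\<pi> \<rho> U_\<pi>^\<dagger>, where U_\<pi> (X_1\<otimes>..\<otimes>X_m) U_\<pi>^\<dagger> = X_\<pi>(1) \<otimes> .. \<otimes> X_\<pi>(m):
   on product operators, entry (f,g) equals \<Prod>_k X_{\<pi> k}(f k, g k) = \<rho>(f \<circ> inv \<pi>, g \<circ> inv \<pi>) *)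
definition perm_conj :: "(nat \<Rightarrow> nat) \<Rightarrow> top \<Rightarrow> top" where
  "perm_conj \<pi> \<rho> = (\<lambda>f g. \<rho> (f \<circ> inv \<pi>) (g \<circ> inv \<pi>))"

definition SSC :: "nat \<Rightarrow> nat \<Rightarrow> top \<Rightarrow> bool" where
  "SSC n m \<rho> \<longleftrightarrow> (\<forall>\<pi>. \<pi> permutes {0..<m} \<longrightarrow>
      (\<forall>f\<in>tidx n m. \<forall>g\<in>tidx n m. perm_conj \<pi> \<rho> f g = \<rho> f g))"

end

theory Submission
  imports Defs
begin

lemma tidx_fin: "finite (tidx n m)" unfolding tidx_def by (simp add: finite_PiE)
lemma tidx_lt: "f \<in> tidx n m \<Longrightarrow> j < m \<Longrightarrow> f j < n" unfolding tidx_def by auto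
lemma tidx_upd: "f \<in> tidx n m \<Longrightarrow> k < m \<Longrightarrow> j < n \<Longrightarrow> f(k:=j) \<in> tidx n m"
  unfolding tidx_def by (auto simp: PiE_iff extensional_def)
lemma tidx_eq: "f \<in> tidx n m \<Longrightarrow> g \<in> tidx n m \<Longrightarrow> (\<And>j. j < m \<Longrightarrow> f j = g j) \<Longrightarrow> f = g"
  unfolding tidx_def by (rule PiE_ext) auto

lemma swap4: "(\<Sum>i\<in>I. \<Sum>h\<in>H. \<Sum>f\<in>T. \<Sum>g\<in>T. (X i h f g :: complex)) = (\<Sum>f\<in>T. \<Sum>g\<in>T. \<Sum>h\<in>H. \<Sum>i\<in>I. X i h f g)"
proof -
  have "(\<Sum>i\<in>I. \<Sum>h\<in>H. \<Sum>f\<in>T. \<Sum>g\<in>T. X i h f g) = (\<Sum>h\<in>H. \<Sum>i\<in>I. \<Sum>f\<in>T. \<Sum>g\<in>T. X i h f g)"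
    by (rule sum.swap)
  also have "\<dots> = (\<Sum>h\<in>H. \<Sum>f\<in>T. \<Sum>g\<in>T. \<Sum>i\<in>I. X i h f g)"
  proof (intro sum.cong refl)
    fix h assume "h \<in> H"
    have "(\<Sum>i\<in>I. \<Sum>f\<in>T. \<Sum>g\<in>T. X i h f g) = (\<Sum>f\<in>T. \<Sum>i\<in>I. \<Sum>g\<in>T. X i h f g)"
      by (rule sum.swap)
    also have "\<dots> = (\<Sum>f\<in>T. \<Sum>g\<in>T. \<Sum>i\<in>I. X i h f g)"
      by (intro sum.cong refl) (rule sum.swap)
    finally show "(\<Sum>i\<in>I. \<Sum>f\<in>T. \<Sum>g\<in>T. X i h f g) = (\<Sum>f\<in>T. \<Sum>g\<in>T. \<Sum>i\<in>I. X i h f g)" .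
  qed
  also have "\<dots> = (\<Sum>f\<in>T. \<Sum>h\<in>H. \<Sum>g\<in>T. \<Sum>i\<in>I. X i h f g)"
    by (rule sum.swap)
  also have "\<dots> = (\<Sum>f\<in>T. \<Sum>g\<in>T. \<Sum>h\<in>H. \<Sum>i\<in>I. X i h f g)"
    by (intro sum.cong refl) (rule sum.swap)
  finally show ?thesis .
qed


lemma qsum:
  fixes \<psi> :: "nat \<Rightarrow> complex"
  assumes unit: "(\<Sum>i<n. \<psi> i * cnj (\<psi> i)) = 1" and a: "a < n" and b: "b < n"
  shows "(\<Sum>i<n. cnj ((if a = i then 1 else 0) - cnj (\<psi> i) * \<psi> a) * ((if b = i then 1 else 0) - cnj (\<psi> i) * \<psi> b))
     = (if a = b then 1 else 0) - cnj (\<psi> a) * \<psi> b"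
proof -
  have "(\<Sum>i<n. cnj ((if a = i then 1 else 0) - cnj (\<psi> i) * \<psi> a) * ((if b = i then 1 else 0) - cnj (\<psi> i) * \<psi> b))
     = (\<Sum>i<n. (if a = i then (if b = i then 1 else 0) else 0) - (if a = i then cnj (\<psi> i) * \<psi> b else 0)
          - (if b = i then \<psi> i * cnj (\<psi> a) else 0) + (\<psi> i * cnj (\<psi> i)) * (cnj (\<psi> a) * \<psi> b))"
    by (intro sum.cong) (auto simp: algebra_simps)
  also have "\<dots> = (if a = b then 1 else 0) - cnj (\<psi> a) * \<psi> b - \<psi> b * cnj (\<psi> a) + (\<Sum>i<n. \<psi> i * cnj (\<psi> i)) * (cnj (\<psi> a) * \<psi> b)"
    using a b by (simp add: sum.distrib sum_subtractf sum_distrib_right[symmetric] cong: if_cong)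
  also have "\<dots> = (if a = b then 1 else 0) - cnj (\<psi> a) * \<psi> b" using unit by simp
  finally show ?thesis .
qed


lemma psd_kernel:
  fixes \<rho> :: top and T :: "(nat\<Rightarrow>nat) set" and w :: "(nat\<Rightarrow>nat) \<Rightarrow> complex"
  assumes fin: "finite T" and herm: "\<forall>f\<in>T. \<forall>g\<in>T. \<rho> g f = cnj (\<rho> f g)"
  and psd: "\<forall>v :: (nat \<Rightarrow> nat) \<Rightarrow> complex. 0 \<le> Re (\<Sum>f\<in>T. \<Sum>g\<in>T. cnj (v f) * \<rho> f g * v g)"
  and zero: "Re (\<Sum>f\<in>T. \<Sum>g\<in>T. cnj (w f) * \<rho> f g * w g) = 0"
  and f0: "f0 \<in> T"
  shows "(\<Sum>g\<in>T. \<rho> f0 g * w g) = 0"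
proof -
  define z where "z = (\<Sum>g\<in>T. \<rho> f0 g * w g)"
  define B where "B = (\<Sum>f\<in>T. \<Sum>g\<in>T. cnj (w f) * \<rho> f g * w g)"
  have cz: "(\<Sum>f\<in>T. cnj (w f) * \<rho> f f0) = cnj z"
    unfolding z_def cnj_sum
  proof (intro sum.cong refl)
    fix f assume "f \<in> T"
    then have "\<rho> f f0 = cnj (\<rho> f0 f)" using herm f0 by blast
    then show "cnj (w f) * \<rho> f f0 = cnj (\<rho> f0 f * w f)" by simp
  qed
  have expand: "(\<Sum>f\<in>T. \<Sum>g\<in>T. cnj (w f + (if f = f0 then t else 0)) * \<rho> f g * (w g + (if g = f0 then t else 0)))
      = B + t * cnj z + cnj t * z + cnj t * t * \<rho> f0 f0" for t
  proof -
    define d where "d = (\<lambda>x. if x = f0 then t else (0::complex))"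
    have e: "cnj (w f + d f) * \<rho> f g * (w g + d g) = cnj (w f) * \<rho> f g * w g + cnj (w f) * \<rho> f g * d g
        + cnj (d f) * \<rho> f g * w g + cnj (d f) * \<rho> f g * d g" for f g
      by (simp add: algebra_simps)
    have s2: "(\<Sum>f\<in>T. \<Sum>g\<in>T. cnj (w f) * \<rho> f g * d g) = t * cnj z"
    proof -
      have "(\<Sum>f\<in>T. \<Sum>g\<in>T. cnj (w f) * \<rho> f g * d g) = (\<Sum>f\<in>T. cnj (w f) * \<rho> f f0 * t)"
        unfolding d_def using fin f0 by (intro sum.cong refl) (simp add: if_distrib sum.delta' cong: if_cong)
      also have "\<dots> = t * cnj z" using cz by (simp add: mult.commute[of _ t] sum_distrib_left[symmetric])
      finally show ?thesis .
    qed
    have s3: "(\<Sum>f\<in>T. \<Sum>g\<in>T. cnj (d f) * \<rho> f g * w g) = cnj t * z"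
    proof -
      have "(\<Sum>f\<in>T. \<Sum>g\<in>T. cnj (d f) * \<rho> f g * w g) = (\<Sum>f\<in>T. if f = f0 then (\<Sum>g\<in>T. cnj t * \<rho> f g * w g) else 0)"
        unfolding d_def by (intro sum.cong refl) simp
      also have "\<dots> = (\<Sum>g\<in>T. cnj t * \<rho> f0 g * w g)" using fin f0 by (simp add: sum.delta')
      also have "\<dots> = cnj t * z" unfolding z_def by (simp add: sum_distrib_left mult.assoc)
      finally show ?thesis .
    qed
    have s4: "(\<Sum>f\<in>T. \<Sum>g\<in>T. cnj (d f) * \<rho> f g * d g) = cnj t * t * \<rho> f0 f0"
    proof -
      have "(\<Sum>f\<in>T. \<Sum>g\<in>T. cnj (d f) * \<rho> f g * d g) = (\<Sum>f\<in>T. if f = f0 then (\<Sum>g\<in>T. if g = f0 then cnj t * \<rho> f g * t else 0) else 0)"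
        unfolding d_def by (intro sum.cong refl) (auto intro: sum.cong)
      also have "\<dots> = cnj t * t * \<rho> f0 f0" using fin f0 by (simp add: sum.delta' algebra_simps)
      finally show ?thesis .
    qed
    have "(\<Sum>f\<in>T. \<Sum>g\<in>T. cnj (w f + d f) * \<rho> f g * (w g + d g)) = B + t * cnj z + cnj t * z + cnj t * t * \<rho> f0 f0"
      by (simp only: e sum.distrib s2 s3 s4 B_def)
    then show ?thesis unfolding d_def .
  qed
  define r where "r = Re (\<rho> f0 f0)"
  define s :: real where "s = 1 / (\<bar>r\<bar> + 1)"
  have s0: "s > 0" unfolding s_def by auto
  have sr: "s * r < 1" unfolding s_def by (simp add: field_simps)
  define a where "a = (cmod z)^2"
  have a0: "a \<ge> 0" unfolding a_def by simp
  have "0 \<le> Re (B + (- of_real s * z) * cnj z + cnj (- of_real s * z) * z + cnj (- of_real s * z) * (- of_real s * z) * \<rho> f0 f0)"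
    using psd[rule_format, of "\<lambda>x. w x + (if x = f0 then - of_real s * z else 0)"] by (simp only: expand)
  also have "\<dots> = Re (B - 2 * of_real s * of_real a + of_real s * of_real s * of_real a * \<rho> f0 f0)"
  proof -
    have zz: "z * cnj z = of_real a" unfolding a_def by (metis complex_norm_square)
    show ?thesis unfolding zz[symmetric] by (simp add: algebra_simps)
  qed
  also have "\<dots> = - 2 * s * a + s * s * a * r"
    using zero unfolding B_def r_def by simp
  finally have "0 \<le> - 2 * s * a + s * s * a * r" .
  moreover have "s * s * a * r \<le> s * a"
  proof -
    have "s * a * (s * r) \<le> s * a * 1" using sr s0 a0 by (intro mult_left_mono) auto
    thus ?thesis by (simp add: algebra_simps)
  qed
  ultimately have "s * a \<le> 0" by linarith
  hence "a = 0" using s0 a0 by (simp add: mult_le_0_iff)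
  thus ?thesis unfolding a_def z_def by simp
qed


lemma trace_zero:
  fixes \<rho> :: top and \<psi> :: "nat \<Rightarrow> complex"
  assumes n: "0 < n" and k: "k < m"
  and tr: "(\<Sum>f\<in>tidx n m. \<rho> f f) = 1"
  and red: "\<forall>a<n. \<forall>b<n. reduced n m \<rho> k a b = \<psi> a * cnj (\<psi> b)"
  and unit: "(\<Sum>i<n. \<psi> i * cnj (\<psi> i)) = 1"
  shows "(\<Sum>i<n. \<Sum>h\<in>{h\<in>tidx n m. h k = 0}.
           (\<Sum>f\<in>tidx n m. \<Sum>g\<in>tidx n m.
              cnj (if (\<forall>j\<in>{0..<m}. j \<noteq> k \<longrightarrow> f j = h j) then (if f k = i then 1 else 0) - cnj (\<psi> i) * \<psi> (f k) else 0)
              * \<rho> f g *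
              (if (\<forall>j\<in>{0..<m}. j \<noteq> k \<longrightarrow> g j = h j) then (if g k = i then 1 else 0) - cnj (\<psi> i) * \<psi> (g k) else 0))) = 0"
    (is "?L = 0")
proof -
  define T where "T = tidx n m"
  define H where "H = {h\<in>T. h k = 0}"
  define ag where "ag = (\<lambda>f g :: nat \<Rightarrow> nat. \<forall>j\<in>{0..<m}. j \<noteq> k \<longrightarrow> f j = g j)"
  define q where "q = (\<lambda>i a. (if a = i then 1 else 0) - cnj (\<psi> i) * \<psi> a)"
  have finT: "finite T" unfolding T_def by (rule tidx_fin)
  have finH: "finite H" unfolding H_def using finT by simp
  have Hs: "(\<Sum>h\<in>H. if ag f h \<and> ag g h then X else 0) = (if ag f g then X else 0)"
    if f: "f \<in> T" and g: "g \<in> T" for f g and X :: complex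
  proof -
    have "{h\<in>H. ag f h \<and> ag g h} = (if ag f g then {f(k:=0)} else {})"
    proof (cases "ag f g")
      case True
      have uniq: "h = f(k:=0)" if "h \<in> H" "ag f h" for h
      proof (rule tidx_eq[of _ n m])
        show "h \<in> tidx n m" using that unfolding H_def T_def by simp
        show "f(k:=0) \<in> tidx n m" using f k n unfolding T_def by (simp add: tidx_upd)
        fix j assume "j < m" then show "h j = (f(k:=0)) j"
          using that unfolding H_def ag_def by (cases "j = k") auto
      qed
      have m1: "f(k:=0) \<in> H"
        using f k n unfolding H_def T_def by (simp add: tidx_upd)
      have m2: "ag f (f(k:=0))" unfolding ag_def by simp
      have m3: "ag g (f(k:=0))" using True unfolding ag_def by (metis fun_upd_other)
      have "{h\<in>H. ag f h \<and> ag g h} = {f(k:=0)}"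
        using uniq m1 m2 m3 by blast
      then show ?thesis using True by simp
    next
      case False
      have "\<not> (ag f h \<and> ag g h)" for h
        using False unfolding ag_def by (metis (no_types, lifting))
      then show ?thesis using False by simp
    qed
    then have "(\<Sum>h\<in>H. if ag f h \<and> ag g h then X else 0) = (\<Sum>h\<in>(if ag f g then {f(k:=0)} else {}). X)"
      using finH by (simp add: sum.inter_filter[symmetric])
    then show ?thesis by simp
  qed
  have inner: "(\<Sum>h\<in>H. \<Sum>i<n. cnj (if ag f h then q i (f k) else 0) * \<rho> f g * (if ag g h then q i (g k) else 0))
      = (if ag f g then \<rho> f g * ((if f k = g k then 1 else 0) - cnj (\<psi> (f k)) * \<psi> (g k)) else 0)"
    if f: "f \<in> T" and g: "g \<in> T" for f g
  proof -
    have fk: "f k < n" and gk: "g k < n" using f g k unfolding T_def by (auto intro: tidx_lt)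
    have "(\<Sum>h\<in>H. \<Sum>i<n. cnj (if ag f h then q i (f k) else 0) * \<rho> f g * (if ag g h then q i (g k) else 0))
       = (\<Sum>h\<in>H. if ag f h \<and> ag g h then \<rho> f g * ((if f k = g k then 1 else 0) - cnj (\<psi> (f k)) * \<psi> (g k)) else 0)"
    proof (intro sum.cong refl)
      fix h
      have "(\<Sum>i<n. cnj (q i (f k)) * \<rho> f g * q i (g k)) = \<rho> f g * (\<Sum>i<n. cnj (q i (f k)) * q i (g k))"
        by (simp add: sum_distrib_left algebra_simps)
      also have "\<dots> = \<rho> f g * ((if f k = g k then 1 else 0) - cnj (\<psi> (f k)) * \<psi> (g k))"
        using qsum[OF unit fk gk] unfolding q_def by (simp add: eq_commute)
      finally show "(\<Sum>i<n. cnj (if ag f h then q i (f k) else 0) * \<rho> f g * (if ag g h then q i (g k) else 0))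
         = (if ag f h \<and> ag g h then \<rho> f g * ((if f k = g k then 1 else 0) - cnj (\<psi> (f k)) * \<psi> (g k)) else 0)"
        by auto
    qed
    also have "\<dots> = (if ag f g then \<rho> f g * ((if f k = g k then 1 else 0) - cnj (\<psi> (f k)) * \<psi> (g k)) else 0)"
      by (rule Hs[OF f g])
    finally show ?thesis .
  qed
  have "?L = (\<Sum>f\<in>T. \<Sum>g\<in>T. \<Sum>h\<in>H. \<Sum>i<n. cnj (if ag f h then q i (f k) else 0) * \<rho> f g * (if ag g h then q i (g k) else 0))"
    unfolding T_def[symmetric] H_def[symmetric] ag_def q_def by (rule swap4)
  also have "\<dots> = (\<Sum>f\<in>T. \<Sum>g\<in>T. (if ag f g then \<rho> f g * ((if f k = g k then 1 else 0) - cnj (\<psi> (f k)) * \<psi> (g k)) else 0))"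
    using inner by (intro sum.cong refl) auto
  also have "\<dots> = (\<Sum>f\<in>T. \<Sum>g\<in>T. (if g = f then \<rho> f g else 0)) - (\<Sum>f\<in>T. \<Sum>g\<in>T. (if ag f g then \<rho> f g * cnj (\<psi> (f k)) * \<psi> (g k) else 0))"
  proof -
    have "ag f g \<and> f k = g k \<longleftrightarrow> g = f" if "f \<in> T" "g \<in> T" for f g
    proof
      assume a: "ag f g \<and> f k = g k"
      show "g = f"
      proof (rule tidx_eq[of _ n m])
        show "g \<in> tidx n m" "f \<in> tidx n m" using that unfolding T_def by auto
        fix j assume "j < m" then show "g j = f j" using a unfolding ag_def by (cases "j = k") auto
      qed
    next
      assume "g = f" then show "ag f g \<and> f k = g k" unfolding ag_def by simp
    qed
    note iff = this
    have pt: "(if ag f g then \<rho> f g * ((if f k = g k then 1 else 0) - cnj (\<psi> (f k)) * \<psi> (g k)) else 0)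
        = (if g = f then \<rho> f g else 0) - (if ag f g then \<rho> f g * cnj (\<psi> (f k)) * \<psi> (g k) else 0)"
      if "f \<in> T" "g \<in> T" for f g
    proof (cases "ag f g")
      case agT: True
      show ?thesis
      proof (cases "f k = g k")
        case True
        then have "g = f" using iff[OF that] agT by simp
        then show ?thesis using agT by (simp add: algebra_simps)
      next
        case False
        then have "g \<noteq> f" by auto
        then show ?thesis using False agT by (simp add: algebra_simps)
      qed
    next
      case False
      then have "g \<noteq> f" using iff[OF that] by auto
      then show ?thesis using False by simp
    qed
    show ?thesis
      unfolding sum_subtractf[symmetric] using pt by (intro sum.cong refl) auto
  qed
  also have "(\<Sum>f\<in>T. \<Sum>g\<in>T. (if g = f then \<rho> f g else 0)) = 1"
    using tr unfolding T_def by (simp add: sum.delta tidx_fin)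
  also have "(\<Sum>f\<in>T. \<Sum>g\<in>T. (if ag f g then \<rho> f g * cnj (\<psi> (f k)) * \<psi> (g k) else 0)) = 1"
  proof -
    define S where "S = {(f,g). f \<in> T \<and> g \<in> T \<and> ag f g}"
    define F where "F = (\<lambda>(f,g). \<rho> f g * cnj (\<psi> (f k)) * \<psi> (g k))"
    have finS: "finite S"
      by (rule finite_subset[of _ "T \<times> T"]) (auto simp: S_def finT)
    have "(\<Sum>f\<in>T. \<Sum>g\<in>T. (if ag f g then \<rho> f g * cnj (\<psi> (f k)) * \<psi> (g k) else 0))
        = (\<Sum>p\<in>T \<times> T. if (case p of (f,g) \<Rightarrow> ag f g) then F p else 0)"
      unfolding F_def by (simp add: sum.cartesian_product split_def) (intro sum.cong refl, auto)
    also have "\<dots> = sum F S"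
      unfolding S_def using finT
      by (subst sum.inter_filter[symmetric]) (auto intro!: sum.cong simp: finite_cartesian_product)
    also have "\<dots> = (\<Sum>y\<in>{..<n} \<times> {..<n}. sum F {x. x \<in> S \<and> (\<lambda>(f,g). (f k, g k)) x = y})"
      by (rule sum.group[symmetric]) (use finS k in \<open>auto simp: S_def T_def intro: tidx_lt\<close>)
    also have "\<dots> = (\<Sum>y\<in>{..<n} \<times> {..<n}. (case y of (a,b) \<Rightarrow> reduced n m \<rho> k a b * cnj (\<psi> a) * \<psi> b))"
    proof (intro sum.cong refl)
      fix y assume y: "y \<in> {..<n} \<times> {..<n}"
      obtain a b where ab: "y = (a,b)" by force
      have "sum F {x. x \<in> S \<and> (\<lambda>(f,g). (f k, g k)) x = y}
          = (\<Sum>x\<in>{(f,g). f \<in> tidx n m \<and> g \<in> tidx n m \<and> f k = a \<and> g k = b \<and>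
                       (\<forall>j\<in>{0..<m}. j \<noteq> k \<longrightarrow> f j = g j)}. (case x of (f,g) \<Rightarrow> \<rho> f g) * cnj (\<psi> a) * \<psi> b)"
        unfolding F_def S_def ab T_def ag_def
        by (intro sum.cong) auto
      also have "\<dots> = reduced n m \<rho> k a b * cnj (\<psi> a) * \<psi> b"
        unfolding reduced_def by (simp add: sum_distrib_right)
      finally show "sum F {x. x \<in> S \<and> (\<lambda>(f,g). (f k, g k)) x = y} = (case y of (a,b) \<Rightarrow> reduced n m \<rho> k a b * cnj (\<psi> a) * \<psi> b)"
        using ab by simp
    qed
    also have "\<dots> = (\<Sum>a<n. \<Sum>b<n. (\<psi> a * cnj (\<psi> a)) * (\<psi> b * cnj (\<psi> b)))"
      using red by (simp add: sum.cartesian_product[symmetric] algebra_simps)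
    also have "\<dots> = 1" using unit by (simp add: sum_distrib_left[symmetric] sum_distrib_right[symmetric])
    finally show ?thesis .
  qed
  finally show ?thesis by simp
qed


lemma column:
  fixes \<rho> :: top and \<psi> :: "nat \<Rightarrow> complex"
  assumes n: "0 < n" and k: "k < m"
  and herm: "\<forall>f\<in>tidx n m. \<forall>g\<in>tidx n m. \<rho> g f = cnj (\<rho> f g)"
  and psd: "\<forall>v :: (nat \<Rightarrow> nat) \<Rightarrow> complex. 0 \<le> Re (\<Sum>f\<in>tidx n m. \<Sum>g\<in>tidx n m. cnj (v f) * \<rho> f g * v g)"
  and tr: "(\<Sum>f\<in>tidx n m. \<rho> f f) = 1"
  and red: "\<forall>a<n. \<forall>b<n. reduced n m \<rho> k a b = \<psi> a * cnj (\<psi> b)"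
  and unit: "(\<Sum>i<n. \<psi> i * cnj (\<psi> i)) = 1"
  and f: "f \<in> tidx n m" and g: "g \<in> tidx n m"
  shows "\<rho> f g = cnj (\<psi> (g k)) * (\<Sum>j<n. \<psi> j * \<rho> f (g(k:=j)))"
proof -
  define T where "T = tidx n m"
  define H where "H = {h\<in>T. h k = 0}"
  define ag where "ag = (\<lambda>f g :: nat \<Rightarrow> nat. \<forall>j\<in>{0..<m}. j \<noteq> k \<longrightarrow> f j = g j)"
  define q where "q = (\<lambda>i a. (if a = i then 1 else 0) - cnj (\<psi> i) * \<psi> a)"
  define w where "w = (\<lambda>i h f. if ag f h then q i (f k) else (0::complex))"
  define F where "F = (\<lambda>v. \<Sum>f\<in>T. \<Sum>g\<in>T. cnj (v f) * \<rho> f g * v g)"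
  have finT: "finite T" unfolding T_def by (rule tidx_fin)
  have finH: "finite H" unfolding H_def using finT by simp
  have sum0: "(\<Sum>i<n. \<Sum>h\<in>H. F (w i h)) = 0"
    unfolding F_def w_def ag_def q_def H_def T_def by (rule trace_zero[OF n k tr red unit])
  have nonneg: "0 \<le> Re (F (w i h))" for i h
    using psd unfolding F_def T_def by blast
  have "(\<Sum>i<n. \<Sum>h\<in>H. Re (F (w i h))) = 0"
    using arg_cong[OF sum0, of Re] by (simp add: Re_sum)
  then have all0: "\<forall>i\<in>{..<n}. \<forall>h\<in>H. Re (F (w i h)) = 0"
    using finH nonneg by (simp add: sum_nonneg_eq_0_iff sum_nonneg)
  define i where "i = g k"
  define h where "h = g(k:=0)"
  have i: "i < n" unfolding i_def using g k by (rule tidx_lt)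
  have h: "h \<in> H" unfolding h_def H_def T_def using g k n by (simp add: tidx_upd)
  have kern: "(\<Sum>g'\<in>T. \<rho> f g' * w i h g') = 0"
  proof -
    have "Re (F (w i h)) = 0" using all0 i h by blast
    then show ?thesis
      using psd_kernel[OF finT, of \<rho> "w i h" f] herm psd f unfolding T_def F_def by blast
  qed
  have setq: "{g'\<in>T. ag g' h} = (\<lambda>j. g(k:=j)) ` {..<n}"
  proof (intro equalityI subsetI)
    fix g' assume a: "g' \<in> {g'\<in>T. ag g' h}"
    have "g' = g(k := g' k)"
    proof (rule tidx_eq[of _ n m])
      show "g' \<in> tidx n m" using a unfolding T_def by simp
      show "g(k := g' k) \<in> tidx n m" using a g k unfolding T_def by (intro tidx_upd) (auto intro: tidx_lt)
      fix j assume "j < m" then show "g' j = (g(k := g' k)) j"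
        using a unfolding ag_def h_def by (cases "j = k") auto
    qed
    moreover have "g' k < n" using a k unfolding T_def by (auto intro: tidx_lt)
    ultimately show "g' \<in> (\<lambda>j. g(k:=j)) ` {..<n}" by blast
  next
    fix g' assume "g' \<in> (\<lambda>j. g(k:=j)) ` {..<n}"
    then obtain j where j: "j < n" "g' = g(k:=j)" by auto
    then show "g' \<in> {g'\<in>T. ag g' h}" using g k unfolding T_def ag_def h_def by (simp add: tidx_upd)
  qed
  have inj: "inj_on (\<lambda>j. g(k:=j)) {..<n}"
    by (rule inj_onI) (metis fun_upd_same)
  have "(\<Sum>g'\<in>T. \<rho> f g' * w i h g') = (\<Sum>g'\<in>{g'\<in>T. ag g' h}. \<rho> f g' * q i (g' k))"
    unfolding w_def using finT by (simp add: sum.inter_filter if_distrib cong: if_cong)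
  also have "\<dots> = (\<Sum>j<n. \<rho> f (g(k:=j)) * q i j)"
    unfolding setq by (subst sum.reindex[OF inj]) simp
  also have "\<dots> = (\<Sum>j<n. (if j = i then \<rho> f (g(k:=j)) else 0)) - cnj (\<psi> i) * (\<Sum>j<n. \<psi> j * \<rho> f (g(k:=j)))"
  proof -
    have "\<rho> f (g(k:=j)) * q i j = (if j = i then \<rho> f (g(k:=j)) else 0) - cnj (\<psi> i) * (\<psi> j * \<rho> f (g(k:=j)))" for j
      unfolding q_def by (simp add: algebra_simps)
    then show ?thesis by (simp add: sum_subtractf sum_distrib_left)
  qed
  also have "\<dots> = \<rho> f g - cnj (\<psi> (g k)) * (\<Sum>j<n. \<psi> j * \<rho> f (g(k:=j)))"
    using i unfolding i_def by simp
  finally show ?thesis using kern by simp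
qed


lemma tidx_perm:
  assumes p: "\<pi> permutes {0..<m}" and f: "f \<in> tidx n m"
  shows "f \<circ> inv \<pi> \<in> tidx n m"
proof -
  have ip: "inv \<pi> permutes {0..<m}" using p by (rule permutes_inv)
  have "(f \<circ> inv \<pi>) j < n" if "j < m" for j
  proof -
    have "inv \<pi> j \<in> {0..<m}" using permutes_in_image[OF ip] that by simp
    then show ?thesis using f by (simp add: tidx_lt)
  qed
  moreover have "(f \<circ> inv \<pi>) j = undefined" if "\<not> j < m" for j
  proof -
    have "inv \<pi> j = j" using permutes_not_in[OF ip] that by simp
    then show ?thesis using f that unfolding tidx_def by (auto simp: PiE_iff extensional_def)
  qed
  ultimately show ?thesis unfolding tidx_def by (auto simp: PiE_iff extensional_def)
qed

theorem proposition3: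
  fixes n m :: nat and \<rho> :: top
  assumes "n \<ge> 2" and "m \<ge> 2"
    and "density_op n m \<rho>"
    and "RSC n m \<rho>"
    and "\<forall>k<m. pure_state n (reduced n m \<rho> k)"
  shows "SSC n m \<rho>"
proof -
  define T where "T = tidx n m"
  have n: "0 < n" and m: "0 < m" using assms(1,2) by auto
  have herm: "\<forall>f\<in>tidx n m. \<forall>g\<in>tidx n m. \<rho> g f = cnj (\<rho> f g)"
    and psd: "\<forall>v :: (nat \<Rightarrow> nat) \<Rightarrow> complex. 0 \<le> Re (\<Sum>f\<in>tidx n m. \<Sum>g\<in>tidx n m. cnj (v f) * \<rho> f g * v g)"
    and tr: "(\<Sum>f\<in>tidx n m. \<rho> f f) = 1"
    using assms(3) unfolding density_op_def by blast+
  obtain \<psi> :: "nat \<Rightarrow> complex" where psi1: "(\<Sum>i<n. (cmod (\<psi> i))\<^sup>2) = 1"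
    and psi2: "\<forall>a<n. \<forall>b<n. reduced n m \<rho> 0 a b = \<psi> a * cnj (\<psi> b)"
    using assms(5) m unfolding pure_state_def by blast
  have unit: "(\<Sum>i<n. \<psi> i * cnj (\<psi> i)) = 1"
  proof -
    have "(\<Sum>i<n. \<psi> i * cnj (\<psi> i)) = of_real (\<Sum>i<n. (cmod (\<psi> i))\<^sup>2)"
      unfolding of_real_sum by (intro sum.cong refl) (metis complex_norm_square)
    then show ?thesis using psi1 by simp
  qed
  have red: "\<forall>a<n. \<forall>b<n. reduced n m \<rho> k a b = \<psi> a * cnj (\<psi> b)" if k: "k < m" for k
    using psi2 assms(4) k m unfolding RSC_def by metis
  have col: "\<rho> f g = cnj (\<psi> (g k)) * (\<Sum>j<n. \<psi> j * \<rho> f (g(k:=j)))"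
    if "k < m" "f \<in> T" "g \<in> T" for k f g
    using column[OF n that(1) herm psd tr red[OF that(1)] unit] that unfolding T_def by blast
  obtain a0 where a0: "a0 < n" "\<psi> a0 \<noteq> 0"
  proof (rule ccontr)
    assume "\<not> thesis"
    then have "\<forall>i<n. \<psi> i = 0" using that by blast
    then have "(\<Sum>i<n. \<psi> i * cnj (\<psi> i)) = 0" by simp
    then show False using unit by simp
  qed
  define c where "c = cnj (\<psi> a0)"
  have c0: "c \<noteq> 0" unfolding c_def using a0 by simp
  define P where "P = (\<lambda>g :: nat \<Rightarrow> nat. \<Prod>j\<in>{0..<m}. cnj (\<psi> (g j)))"
  define g0 :: "nat \<Rightarrow> nat" where "g0 = restrict (\<lambda>_. a0) {0..<m}"
  have g0T: "g0 \<in> T" unfolding g0_def T_def tidx_def using a0 by auto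
  have Pg0: "P g0 = c ^ m" unfolding P_def g0_def c_def by simp
  have cross: "\<rho> f g * c = \<rho> f (g(k:=a0)) * cnj (\<psi> (g k))"
    if k: "k < m" and f: "f \<in> T" and g: "g \<in> T" for k f g
  proof -
    have g': "g(k:=a0) \<in> T" using g k a0 unfolding T_def by (simp add: tidx_upd)
    have e1: "\<rho> f g = cnj (\<psi> (g k)) * (\<Sum>j<n. \<psi> j * \<rho> f (g(k:=j)))" by (rule col[OF k f g])
    have e2: "\<rho> f (g(k:=a0)) = c * (\<Sum>j<n. \<psi> j * \<rho> f (g(k:=j)))"
      using col[OF k f g'] unfolding c_def by simp
    show ?thesis unfolding e1 e2 by (simp add: algebra_simps)
  qed
  have ind: "\<forall>g\<in>T. (\<forall>j. p \<le> j \<and> j < m \<longrightarrow> g j = a0) \<longrightarrow> \<rho> f g * c ^ m = \<rho> f g0 * P g"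
    if f: "f \<in> T" and "p \<le> m" for f p
    using that(2)
  proof (induction p)
    case 0
    show ?case
    proof (intro ballI impI)
      fix g assume g: "g \<in> T" and h: "\<forall>j. 0 \<le> j \<and> j < m \<longrightarrow> g j = a0"
      have "g = g0"
        using g g0T h unfolding T_def by (intro tidx_eq[of _ n m]) (auto simp: g0_def)
      then show "\<rho> f g * c ^ m = \<rho> f g0 * P g" using Pg0 by simp
    qed
  next
    case (Suc p)
    then have p: "p < m" and IH: "\<forall>g\<in>T. (\<forall>j. p \<le> j \<and> j < m \<longrightarrow> g j = a0) \<longrightarrow> \<rho> f g * c ^ m = \<rho> f g0 * P g"
      by auto
    show ?case
    proof (intro ballI impI)
      fix g assume g: "g \<in> T" and h: "\<forall>j. Suc p \<le> j \<and> j < m \<longrightarrow> g j = a0"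
      define g' where "g' = g(p:=a0)"
      have g'T: "g' \<in> T" unfolding g'_def using g p a0 unfolding T_def by (simp add: tidx_upd)
      have h': "\<forall>j. p \<le> j \<and> j < m \<longrightarrow> g' j = a0" using h unfolding g'_def
        by (metis Suc_leI fun_upd_apply le_neq_implies_less)
      have I: "\<rho> f g' * c ^ m = \<rho> f g0 * P g'" using IH g'T h' by blast
      have X: "\<rho> f g * c = \<rho> f g' * cnj (\<psi> (g p))" unfolding g'_def by (rule cross[OF p f g])
      define R where "R = (\<Prod>j\<in>{0..<m} - {p}. cnj (\<psi> (g j)))"
      have Pg: "P g = cnj (\<psi> (g p)) * R" unfolding P_def R_def using p
        by (subst prod.remove[of _ p]) auto
      have Pg': "P g' = c * R" unfolding P_def R_def c_def using p
        by (subst prod.remove[of _ p]) (auto simp: g'_def intro!: prod.cong)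
      have "(\<rho> f g * c ^ m) * c = (\<rho> f g0 * P g) * c"
      proof -
        have "(\<rho> f g * c ^ m) * c = (\<rho> f g * c) * c ^ m" by (simp add: algebra_simps)
        also have "\<dots> = (\<rho> f g' * c ^ m) * cnj (\<psi> (g p))" unfolding X by (simp add: algebra_simps)
        also have "\<dots> = \<rho> f g0 * P g' * cnj (\<psi> (g p))" unfolding I ..
        also have "\<dots> = (\<rho> f g0 * P g) * c" unfolding Pg Pg' by (simp add: algebra_simps)
        finally show ?thesis .
      qed
      then show "\<rho> f g * c ^ m = \<rho> f g0 * P g" using c0 by simp
    qed
  qed
  have main: "\<rho> f g * c ^ m = \<rho> f g0 * P g" if "f \<in> T" "g \<in> T" for f g
    using ind[OF that(1) order_refl] that(2) by auto
  define K where "K = cnj (\<rho> g0 g0) / (c ^ m * cnj (c ^ m))"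
  have cm: "c ^ m * cnj (c ^ m) \<noteq> 0" using c0 by simp
  have form: "\<rho> f g = K * cnj (P f) * P g" if f: "f \<in> T" and g: "g \<in> T" for f g
  proof -
    have h1: "\<rho> f g0 = cnj (\<rho> g0 f)" using herm f g0T unfolding T_def by blast
    have h2: "\<rho> g0 f * c ^ m = \<rho> g0 g0 * P f" by (rule main[OF g0T f])
    have h3: "\<rho> f g0 * cnj (c ^ m) = cnj (\<rho> g0 g0) * cnj (P f)"
      unfolding h1 using arg_cong[OF h2, of cnj] by simp
    have "\<rho> f g * (c ^ m * cnj (c ^ m)) = (\<rho> f g * c ^ m) * cnj (c ^ m)" by (simp add: algebra_simps)
    also have "\<dots> = (\<rho> f g0 * cnj (c ^ m)) * P g" unfolding main[OF f g] by (simp add: algebra_simps)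
    also have "\<dots> = cnj (\<rho> g0 g0) * cnj (P f) * P g" unfolding h3 ..
    finally show ?thesis unfolding K_def using cm by (simp add: field_simps)
  qed
  show ?thesis unfolding SSC_def
  proof (intro allI impI ballI)
    fix \<pi> f g assume p: "\<pi> permutes {0..<m}" and f: "f \<in> tidx n m" and g: "g \<in> tidx n m"
    have ip: "inv \<pi> permutes {0..<m}" using p by (rule permutes_inv)
    have Pp: "P (h \<circ> inv \<pi>) = P h" for h
      unfolding P_def using prod.permute[OF ip, of "\<lambda>j. cnj (\<psi> (h j))"] by (simp add: comp_def)
    have fT: "f \<circ> inv \<pi> \<in> T" and gT: "g \<circ> inv \<pi> \<in> T" using tidx_perm[OF p] f g unfolding T_def by auto
    show "perm_conj \<pi> \<rho> f g = \<rho> f g"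
      unfolding perm_conj_def form[OF fT gT] Pp using form f g unfolding T_def by simp
  qed
qed

end
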